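(* Let $\mathbf A$ be a super-paraorthomodular lattice. Then for all $x,y\in A$, if $x\leq y$ then $y\land(y'\lor(x\land x'))=(y\land y')\lor(x\land x')$.
   Context: A pseudo-Kleene lattice is an algebra $(A,\land,\lor,{}',0,1)$ that is a bounded lattice with an antitone involution ${}'$ ($x\leq y\Rightarrow y'\leq x'$, $x''=x$) satisfying $x\land x'\leq y\lor y'$. It is super-paraorthomodular if for all $x,y$: (SP1) $x\leq y$ and $x'\land y=(x\land x')\lor(y\land y')$ imply $y\land(x\lor x')=x\lor(y\land y')$; (SP2) $x\leq y$ implies $(x\land x')\lor(y\land y')=(x'\land y)\land(x'\land y)'$. *)

theory Defs
  imports Main
begin

definition pseudo_kleene :: "('a::bounded_lattice \<Rightarrow> 'a) \<Rightarrow> bool" where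
  "pseudo_kleene c \<longleftrightarrow>
     (\<forall>x y. x \<le> y \<longrightarrow> c y \<le> c x) \<and>
     (\<forall>x. c (c x) = x) \<and>
     (\<forall>x y. inf x (c x) \<le> sup y (c y))"

definition super_paraorthomodular :: "('a::bounded_lattice \<Rightarrow> 'a) \<Rightarrow> bool" where
  "super_paraorthomodular c \<longleftrightarrow> pseudo_kleene c \<and>
     (\<forall>x y. x \<le> y \<and> inf (c x) y = sup (inf x (c x)) (inf y (c y))
        \<longrightarrow> inf y (sup x (c x)) = sup x (inf y (c y))) \<and>
     (\<forall>x y. x \<le> y \<longrightarrow>
        sup (inf x (c x)) (inf y (c y)) = inf (inf (c x) y) (c (inf (c x) y)))"

end

theory Submission
  imports Defs
begin

theorem lemma3p3:
  fixes c :: "'a::bounded_lattice \<Rightarrow> 'a"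
  assumes "super_paraorthomodular c"
    and "x \<le> y"
  shows "inf y (sup (c y) (inf x (c x))) = sup (inf y (c y)) (inf x (c x))"
proof -
  have pk: "pseudo_kleene c"
    using assms(1) unfolding super_paraorthomodular_def by (elim conjE)
  have anti: "\<And>a b. a \<le> b \<Longrightarrow> c b \<le> c a"
    using pk unfolding pseudo_kleene_def by blast
  have inv: "\<And>a. c (c a) = a"
    using pk unfolding pseudo_kleene_def by (elim conjE) simp
  have sp2all: "\<forall>x y. x \<le> y \<longrightarrow>
        sup (inf x (c x)) (inf y (c y)) = inf (inf (c x) y) (c (inf (c x) y))"
    using assms(1) unfolding super_paraorthomodular_def by (elim conjE)
  have sp2: "sup (inf x (c x)) (inf y (c y)) = inf (inf (c x) y) (c (inf (c x) y))"
    using sp2all assms(2) by simp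
  define z where "z = inf (c x) y"
  have cyx: "c y \<le> c x" using anti[OF assms(2)] .
  have "c (c x) \<le> c z" unfolding z_def by (rule anti) (rule inf.cobounded1)
  hence z1: "x \<le> c z" using inv by simp
  have z2: "c y \<le> c z" unfolding z_def by (rule anti) (rule inf.cobounded2)
  have "inf x (c x) \<le> c z" using z1 by (rule inf.coboundedI1)
  hence a1: "sup (c y) (inf x (c x)) \<le> c z" using z2 by (rule sup_least[rotated])
  have a2: "sup (c y) (inf x (c x)) \<le> c x"
    using cyx inf.cobounded2 by (rule sup_least)
  have "inf y (sup (c y) (inf x (c x))) \<le> inf z (c z)"
  proof (rule inf_greatest)
    show "inf y (sup (c y) (inf x (c x))) \<le> z" unfolding z_def
      using inf.coboundedI2[OF a2] inf.cobounded1 by (rule inf_greatest)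
    show "inf y (sup (c y) (inf x (c x))) \<le> c z"
      using a1 by (rule inf.coboundedI2)
  qed
  hence le: "inf y (sup (c y) (inf x (c x))) \<le> sup (inf y (c y)) (inf x (c x))"
    using sp2 unfolding z_def by (simp only: sup_commute)
  have ge: "sup (inf y (c y)) (inf x (c x)) \<le> inf y (sup (c y) (inf x (c x)))"
  proof (rule sup_least)
    show "inf y (c y) \<le> inf y (sup (c y) (inf x (c x)))"
      using inf.cobounded1 inf.coboundedI2[OF sup.cobounded1] by (rule inf_greatest)
    have "inf x (c x) \<le> y" using assms(2) by (rule inf.coboundedI1)
    thus "inf x (c x) \<le> inf y (sup (c y) (inf x (c x)))"
      using sup.cobounded2 by (rule inf_greatest)
  qed
  show ?thesis using le ge by (rule antisym)
qed

end
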